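(* Assume $x(0)=x'(0)=0$ and additionally $p'(t)\to0$ as $t\to\infty$. If there are constants $c_1,c_2$ such that \[ x(t)=\rho(t)\big[c_1\sin(\omega t)+c_2\cos(\omega t)\big]+o(\rho(t))\quad (t\to\infty), \] then $y_2(t)=o(\rho(t))$ as $t\to\infty$.
   Context: Standing assumptions: $\omega>0$ is a constant; $p\in C^1([0,\infty))$ with $p(t)>0$ and $p'(t)<0$ for all $t\ge0$, $\int_0^\infty p(t)\,dt=\infty$ and $\int_0^\infty p(t)^2\,dt<\infty$; $f\in L^1_{\mathrm{loc}}([0,\infty))$. $x$ denotes the solution of $x''(t)+p(t)x'(t)+\omega^2x(t)=f(t)$, $t\ge0$. Notation: $A(t)=\exp(\frac12\int_0^tp(s)\,ds)$, $\rho(t)=1/A(t)$; $y_1(t)=\int_0^te^{-\omega^2(t-s)}f(s)\,ds$; $y_2(t)=\int_0^te^{-\omega^2(t-s)}y_1(s)\,ds=\int_0^t(t-s)e^{-\omega^2(t-s)}f(s)\,ds$. *)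

theory Defs
  imports "HOL-Analysis.Analysis" "HOL-Library.Landau_Symbols"
begin

definition A_fun :: "(real \<Rightarrow> real) \<Rightarrow> real \<Rightarrow> real" where
  "A_fun p t = exp ((1/2) * integral {0..t} p)"

definition rho :: "(real \<Rightarrow> real) \<Rightarrow> real \<Rightarrow> real" where
  "rho p t = 1 / A_fun p t"

definition y1 :: "real \<Rightarrow> (real \<Rightarrow> real) \<Rightarrow> real \<Rightarrow> real" where
  "y1 w f t = integral {0..t} (\<lambda>s. exp (- (w^2) * (t - s)) * f s)"

definition y2 :: "real \<Rightarrow> (real \<Rightarrow> real) \<Rightarrow> real \<Rightarrow> real" where
  "y2 w f t = integral {0..t} (\<lambda>s. exp (- (w^2) * (t - s)) * y1 w f s)"

end

theory Submission
  imports Defs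
begin
lemma exp_lip:
  fixes a T u v :: real
  assumes "u \<in> {0..T}" "v \<in> {0..T}"
  shows "abs (exp (a * u) - exp (a * v)) \<le> abs a * exp (abs a * T) * abs (u - v)"
proof -
  have main: "abs (exp (a * u) - exp (a * v)) \<le> abs a * exp (abs a * T) * abs (u - v)" if "v < u" "u \<in> {0..T}" "v \<in> {0..T}" for u v
  proof -
    have "\<And>x. v \<le> x \<Longrightarrow> x \<le> u \<Longrightarrow> DERIV (\<lambda>x. exp (a * x)) x :> a * exp (a * x)"
      by (auto intro!: derivative_eq_intros)
    from MVT2[OF \<open>v < u\<close> this] obtain z where z: "v < z" "z < u" "exp (a * u) - exp (a * v) = (u - v) * (a * exp (a * z))"
      by blast
    have "abs (a * z) \<le> abs a * T" using z that by (auto simp: abs_mult intro!: mult_left_mono)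
    then have "exp (a * z) \<le> exp (abs a * T)" by (metis abs_le_D1 exp_le_cancel_iff)
    then have e1: "abs a * exp (a * z) \<le> abs a * exp (abs a * T)" by (simp add: mult_left_mono)
    have "(u - v) * (abs a * exp (a * z)) \<le> (u - v) * (abs a * exp (abs a * T))"
      using z e1 by (simp add: mult_left_mono)
    moreover have "abs (exp (a * u) - exp (a * v)) = (u - v) * (abs a * exp (a * z))"
      using z by (simp add: abs_mult)
    ultimately show ?thesis using z by (simp add: abs_mult)
  qed
  show ?thesis
    using main[of u v] main[of v u] assms by (cases "u = v"; cases "v < u"; auto simp: abs_minus_commute)
qed

lemma hk_abs_bound:
  fixes f g :: "real \<Rightarrow> real"
  assumes "f integrable_on S" "g integrable_on S" "\<And>x. x \<in> S \<Longrightarrow> abs (f x) \<le> g x"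
  shows "abs (integral S f) \<le> integral S g"
  using integral_norm_bound_integral[of f S g] assms by auto

lemma ibp_exp:
  fixes k K :: "real \<Rightarrow> real" and a T :: real
  assumes T: "0 \<le> T" and kint: "k absolutely_integrable_on {0..T}"
    and K: "\<And>t. t \<in> {0..T} \<Longrightarrow> (k has_integral (K t - K 0)) {0..t}"
  shows "integral {0..T} (\<lambda>s. exp (a * s) * k s) =
         exp (a * T) * K T - K 0 - a * integral {0..T} (\<lambda>s. exp (a * s) * K s)"
proof -
  define L where "L = abs a * exp (abs a * T)"
  have L0: "L \<ge> 0" unfolding L_def by simp
  define \<phi> where "\<phi> u = exp (a * u)" for u
  define W where "W u = integral {0..u} (\<lambda>s. abs (k s))" for u
  have kI: "k integrable_on {0..T}" and akI: "(\<lambda>s. abs (k s)) integrable_on {0..T}"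
    using kint by (auto simp: absolutely_integrable_on_def)
  have phic: "continuous_on S \<phi>" for S unfolding \<phi>_def by (intro continuous_intros)
  have "(\<lambda>s. \<phi> s * k s) absolutely_integrable_on {0..T}"
  proof (rule absolutely_integrable_bounded_measurable_product_real[OF _ _ _ kint])
    show "\<phi> \<in> borel_measurable (lebesgue_on {0..T})"
      by (rule continuous_imp_measurable_on_sets_lebesgue[OF phic]) auto
    show "bounded (\<phi> ` {0..T})"
      by (rule compact_imp_bounded, rule compact_continuous_image[OF phic]) auto
  qed auto
  then have pkI: "(\<lambda>s. \<phi> s * k s) integrable_on {0..T}"
    by (auto simp: absolutely_integrable_on_def)
  have Keq: "K t = K 0 + integral {0..t} k" if "t \<in> {0..T}" for t
    using K[OF that] by (simp add: integral_unique)
  have Kc: "continuous_on {0..T} K"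
  proof -
    have "continuous_on {0..T} (\<lambda>t. K 0 + integral {0..t} k)"
      by (intro continuous_intros indefinite_integral_continuous_1 kI)
    then show ?thesis by (rule continuous_on_eq) (metis Keq)
  qed
  have pKI: "(\<lambda>s. \<phi> s * K s) integrable_on {u..v}" if "{u..v} \<subseteq> {0..T}" for u v
    by (rule integrable_continuous_real, intro continuous_intros phic continuous_on_subset[OF Kc] that)
  have Wc: "continuous_on {0..T} W"
    unfolding W_def by (rule indefinite_integral_continuous_1[OF akI])
  have comb: "integral {0..t} g + integral {t..s} g = integral {0..s} g"
    if "g integrable_on {0..T}" "0 \<le> t" "t \<le> s" "s \<le> T" for g :: "real \<Rightarrow> real" and t s
    by (rule Henstock_Kurzweil_Integration.integral_combine) (use that in \<open>auto intro: integrable_subinterval_real[OF that(1)]\<close>)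
  have Kdiff: "integral {t..s} k = K s - K t" if "0 \<le> t" "t \<le> s" "s \<le> T" for t s
    using comb[OF kI that] Keq[of s] Keq[of t] that by auto
  have Wdiff: "integral {t..s} (\<lambda>s. abs (k s)) = W s - W t" if "0 \<le> t" "t \<le> s" "s \<le> T" for t s
    using comb[OF akI that] that unfolding W_def by auto
  have Kbound: "abs (K s - K t) \<le> W s - W t" if "0 \<le> t" "t \<le> s" "s \<le> T" for t s
  proof -
    have "abs (integral {t..s} k) \<le> integral {t..s} (\<lambda>s. abs (k s))"
      by (rule hk_abs_bound) (use that in \<open>auto intro: integrable_subinterval_real[OF kI] integrable_subinterval_real[OF akI]\<close>)
    then show ?thesis using Kdiff[OF that] Wdiff[OF that] by simp
  qed
  have Wmono: "W t \<le> W s" if "0 \<le> t" "t \<le> s" "s \<le> T" for t s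
    using Kbound[OF that] by linarith
  define D where "D t = integral {0..t} (\<lambda>s. \<phi> s * k s) - \<phi> t * K t + K 0
      + a * integral {0..t} (\<lambda>s. \<phi> s * K s)" for t
  have phiL: "abs (\<phi> u - \<phi> v) \<le> L * abs (u - v)" if "u \<in> {0..T}" "v \<in> {0..T}" for u v
    using exp_lip[OF that, of a] unfolding \<phi>_def L_def by simp
  have aphi: "abs (a * \<phi> u) \<le> L" if "u \<in> {0..T}" for u
  proof -
    have "a * u \<le> abs a * T" using that
      by (metis abs_ge_self abs_mult abs_of_nonneg atLeastAtMost_iff mult_mono' order.trans abs_ge_zero)
    then have "exp (a * u) \<le> exp (abs a * T)" by simp
    then show ?thesis unfolding L_def \<phi>_def by (simp add: abs_mult mult_left_mono)
  qed
  have key: "abs (D s - D t) \<le> 3 * L * (s - t) * (W s - W t)" if ts: "0 \<le> t" "t \<le> s" "s \<le> T" for t s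
  proof -
    define g where "g u = (\<phi> u - \<phi> t) * k u + a * \<phi> u * (K u - K t)" for u
    have sub: "{t..s} \<subseteq> {0..T}" using ts by auto
    have i1: "(\<lambda>u. \<phi> u * k u) integrable_on {t..s}" by (rule integrable_subinterval_real[OF pkI sub])
    have i2: "k integrable_on {t..s}" by (rule integrable_subinterval_real[OF kI sub])
    have i3: "(\<lambda>u. \<phi> u * K u) integrable_on {t..s}" by (rule pKI[OF sub])
    have i4: "(\<lambda>u. a * \<phi> u) integrable_on {t..s}"
      by (rule integrable_continuous_real, intro continuous_intros phic)
    have i5: "(\<lambda>s. abs (k s)) integrable_on {t..s}" by (rule integrable_subinterval_real[OF akI sub])
    have aphiint: "integral {t..s} (\<lambda>u. a * \<phi> u) = \<phi> s - \<phi> t"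
    proof -
      have "((\<lambda>u. a * \<phi> u) has_integral (\<phi> s - \<phi> t)) {t..s}"
        unfolding \<phi>_def
        by (rule fundamental_theorem_of_calculus[OF ts(2)])
           (auto intro!: derivative_eq_intros simp: has_real_derivative_iff_has_vector_derivative[symmetric])
      then show ?thesis by (rule integral_unique)
    qed
    have gI: "g integrable_on {t..s}" and gint: "integral {t..s} g =
        integral {t..s} (\<lambda>u. \<phi> u * k u) - \<phi> t * integral {t..s} k
        + a * integral {t..s} (\<lambda>u. \<phi> u * K u) - K t * integral {t..s} (\<lambda>u. a * \<phi> u)"
    proof -
      have "((\<lambda>u. \<phi> u * k u - \<phi> t * k u + a * (\<phi> u * K u) - K t * (a * \<phi> u)) has_integral
        (integral {t..s} (\<lambda>u. \<phi> u * k u) - \<phi> t * integral {t..s} k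
        + a * integral {t..s} (\<lambda>u. \<phi> u * K u) - K t * integral {t..s} (\<lambda>u. a * \<phi> u))) {t..s}"
        by (intro has_integral_diff has_integral_add has_integral_mult_right integrable_integral i1 i2 i3 i4)
      moreover have "(\<lambda>u. \<phi> u * k u - \<phi> t * k u + a * (\<phi> u * K u) - K t * (a * \<phi> u)) = g"
        unfolding g_def by (auto simp: algebra_simps)
      ultimately show "g integrable_on {t..s}" "integral {t..s} g =
        integral {t..s} (\<lambda>u. \<phi> u * k u) - \<phi> t * integral {t..s} k
        + a * integral {t..s} (\<lambda>u. \<phi> u * K u) - K t * integral {t..s} (\<lambda>u. a * \<phi> u)"
        by (auto simp: has_integral_integrable_integral)
    qed
    have Dst: "D s - D t = integral {t..s} g + (\<phi> t - \<phi> s) * (K s - K t)"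
    proof -
      have "D s - D t = integral {t..s} (\<lambda>u. \<phi> u * k u) - \<phi> s * K s + \<phi> t * K t
          + a * integral {t..s} (\<lambda>u. \<phi> u * K u)"
        unfolding D_def comb[OF pkI ts, symmetric] comb[OF pKI[of 0 T, OF order_refl] ts, symmetric] by (simp add: algebra_simps)
      then show ?thesis unfolding gint aphiint Kdiff[OF ts] by (simp add: algebra_simps)
    qed
    have gb: "abs (g u) \<le> L * (s - t) * abs (k u) + L * (W s - W t)" if u: "u \<in> {t..s}" for u
    proof -
      have uT: "u \<in> {0..T}" "t \<in> {0..T}" using u ts by auto
      have "abs (g u) \<le> abs (\<phi> u - \<phi> t) * abs (k u) + abs (a * \<phi> u) * abs (K u - K t)"
        unfolding g_def by (metis abs_mult abs_triangle_ineq)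
      also have "\<dots> \<le> (L * (s - t)) * abs (k u) + L * (W s - W t)"
      proof (intro add_mono mult_mono)
        show "abs (\<phi> u - \<phi> t) \<le> L * (s - t)"
          proof -
          have "L * (u - t) \<le> L * (s - t)" using u L0 by (intro mult_left_mono) auto
          then show ?thesis using phiL[OF uT] u by auto
        qed
        show "abs (a * \<phi> u) \<le> L" by (rule aphi[OF uT(1)])
        show "abs (K u - K t) \<le> W s - W t"
          using Kbound[of t u] Wmono[of u s] u ts by auto
      qed (use L0 ts in auto)
      finally show ?thesis .
    qed
    have "abs (integral {t..s} g) \<le> integral {t..s} (\<lambda>u. L * (s - t) * abs (k u) + L * (W s - W t))"
      by (rule hk_abs_bound[OF gI _ gb]) (auto intro!: integrable_add integrable_on_mult_right i5 integrable_const_ivl)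
    also have "\<dots> = L * (s - t) * (W s - W t) + L * (W s - W t) * (s - t)"
      using ts by (subst integral_add) (auto intro!: integrable_on_mult_right i5 integrable_const_ivl simp: Wdiff content_real)
    finally have I1: "abs (integral {t..s} g) \<le> 2 * L * (s - t) * (W s - W t)" by simp
    have I2: "abs ((\<phi> t - \<phi> s) * (K s - K t)) \<le> (L * (s - t)) * (W s - W t)"
      unfolding abs_mult
      by (rule mult_mono) (use phiL[of t s] Kbound[OF ts] ts L0 in auto)
    show ?thesis unfolding Dst using I1 I2 by (simp add: algebra_simps)
  qed
  have Dd: "(D has_real_derivative 0) (at t within {0..T})" if t: "t \<in> {0..T}" for t
  proof -
    have "((\<lambda>y. (D y - D t) / (y - t)) \<longlongrightarrow> 0) (at t within {0..T})"
    proof (rule Lim_null_comparison)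
      show "\<forall>\<^sub>F y in at t within {0..T}. norm ((D y - D t) / (y - t)) \<le> 3 * L * abs (W y - W t)"
        unfolding eventually_at_filter
      proof (intro always_eventually allI impI)
        fix y assume y: "y \<noteq> t" "y \<in> {0..T}"
        show "norm ((D y - D t) / (y - t)) \<le> 3 * L * abs (W y - W t)"
        proof (cases "y < t")
          case True
          have k1: "abs (D t - D y) \<le> 3 * L * (t - y) * (W t - W y)" using key[of y t] y t True by auto
          have "W y \<le> W t" using Wmono[of y t] y t True by auto
          then have e: "abs (W y - W t) = W t - W y" by simp
          have "abs (D y - D t) \<le> (t - y) * (3 * L * abs (W y - W t))" using k1 unfolding e by (simp add: abs_minus_commute algebra_simps)
          then show ?thesis using True by (simp add: abs_minus_commute divide_le_eq mult.commute)
        next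
          case False
          then have yt: "t < y" using y by auto
          have k1: "abs (D y - D t) \<le> 3 * L * (y - t) * (W y - W t)" using key[of t y] y t yt by auto
          have "W t \<le> W y" using Wmono[of t y] y t yt by auto
          then have e: "abs (W y - W t) = W y - W t" by simp
          have "abs (D y - D t) \<le> (y - t) * (3 * L * abs (W y - W t))" using k1 unfolding e by (simp add: algebra_simps)
          then show ?thesis using yt by (simp add: divide_le_eq mult.commute)
        qed
      qed
      have "(W \<longlongrightarrow> W t) (at t within {0..T})"
        using Wc t by (simp add: continuous_on_def)
      then have "((\<lambda>y. W y - W t) \<longlongrightarrow> 0) (at t within {0..T})"
        by (simp add: LIM_zero)
      then have "((\<lambda>y. abs (W y - W t)) \<longlongrightarrow> 0) (at t within {0..T})"
        by (rule tendsto_rabs_zero)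
      then show "((\<lambda>y. 3 * L * abs (W y - W t)) \<longlongrightarrow> 0) (at t within {0..T})"
        by (rule tendsto_mult_right_zero)
    qed
    then show ?thesis by (simp add: has_field_derivative_iff)
  qed
  have "\<exists>c. \<forall>x\<in>{0..T}. D x = c"
    by (rule has_field_derivative_zero_constant) (auto intro: Dd)
  then have "D T = D 0" using T by auto
  moreover have "D 0 = 0" unfolding D_def \<phi>_def by simp
  ultimately show ?thesis unfolding D_def \<phi>_def by (simp add: algebra_simps)
qed

definition Top :: "real \<Rightarrow> (real \<Rightarrow> real) \<Rightarrow> real \<Rightarrow> real" where
  "Top a h t = integral {0..t} (\<lambda>s. exp (- a * (t - s)) * h s)"

lemma Top_exp: "Top a h t = exp (- a * t) * integral {0..t} (\<lambda>s. exp (a * s) * h s)"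
proof -
  have "(\<lambda>s. exp (- a * (t - s)) * h s) = (\<lambda>s. exp (- a * t) * (exp (a * s) * h s))"
    by (auto simp: exp_add[symmetric] algebra_simps)
  then show ?thesis unfolding Top_def by (simp add: Henstock_Kurzweil_Integration.integral_mult_right)
qed

lemma Top_smallo:
  fixes r h :: "real \<Rightarrow> real" and a S0 :: real
  assumes a: "a > 0" and rpos: "\<And>t. r t > 0"
    and rgrow: "\<And>s t. S0 \<le> s \<Longrightarrow> s \<le> t \<Longrightarrow> r s \<le> exp ((a/2) * (t - s)) * r t"
    and rexp: "(\<lambda>t. exp (- a * t)) \<in> o[at_top](r)"
    and hc: "\<And>t. continuous_on {0..t} h"
    and ho: "h \<in> o[at_top](r)"
  shows "Top a h \<in> o[at_top](r)"
proof (rule landau_o.smallI)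
  fix c :: real assume c: "c > 0"
  define e where "e = c * a / 4"
  have e: "e > 0" using c a by (simp add: e_def)
  obtain S1 where S1: "\<And>t. t \<ge> S1 \<Longrightarrow> norm (h t) \<le> e * norm (r t)"
    using landau_o.smallD[OF ho e] by (auto simp: eventually_at_top_linorder)
  define S where "S = max 0 (max S0 S1)"
  define M where "M = abs (integral {0..S} (\<lambda>s. exp (a * s) * h s))"
  have "c / 2 / (M + 1) > 0" using c by (simp add: M_def add_pos_nonneg)
  from landau_o.smallD[OF rexp this] obtain S2 where
    S2: "\<And>t. t \<ge> S2 \<Longrightarrow> norm (exp (- a * t)) \<le> c / 2 / (M + 1) * norm (r t)"
    by (auto simp: eventually_at_top_linorder)
  show "\<forall>\<^sub>F t in at_top. norm (Top a h t) \<le> c * norm (r t)"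
    unfolding eventually_at_top_linorder
  proof (intro exI allI impI)
    fix t assume t: "t \<ge> max S S2"
    have St: "0 \<le> S" "S \<le> t" using t by (auto simp: S_def)
    have cont: "continuous_on {u..v} (\<lambda>s. exp (- a * (t - s)) * h s)" if "0 \<le> u" for u v
      by (intro continuous_intros continuous_on_subset[OF hc[of v]]) (use that in auto)
    have split: "Top a h t = integral {0..S} (\<lambda>s. exp (- a * (t - s)) * h s)
                  + integral {S..t} (\<lambda>s. exp (- a * (t - s)) * h s)"
      unfolding Top_def
      by (rule Henstock_Kurzweil_Integration.integral_combine[symmetric])
         (use St integrable_continuous_real[OF cont[of 0 t]] in auto)
    have first: "integral {0..S} (\<lambda>s. exp (- a * (t - s)) * h s) = exp (- a * t) * integral {0..S} (\<lambda>s. exp (a * s) * h s)"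
    proof -
      have "(\<lambda>s. exp (- a * (t - s)) * h s) = (\<lambda>s. exp (- a * t) * (exp (a * s) * h s))"
        by (auto simp: exp_add[symmetric] algebra_simps)
      then show ?thesis by (simp add: Henstock_Kurzweil_Integration.integral_mult_right)
    qed
    have b1: "abs (integral {0..S} (\<lambda>s. exp (- a * (t - s)) * h s)) \<le> c / 2 * r t"
    proof -
      have "abs (integral {0..S} (\<lambda>s. exp (- a * (t - s)) * h s)) = exp (- a * t) * M"
        unfolding first M_def by (simp add: abs_mult)
      also have "\<dots> \<le> c / 2 / (M + 1) * r t * M"
        using S2[of t] t rpos[of t] by (intro mult_right_mono) (auto simp: M_def)
      also have "\<dots> \<le> c / 2 * r t"
      proof -
        have "M / (M + 1) \<le> 1" by (simp add: M_def)
        then have "c / 2 * r t * (M / (M + 1)) \<le> c / 2 * r t * 1"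
          using c rpos[of t] by (intro mult_left_mono) auto
        then show ?thesis by simp
      qed
      finally show ?thesis .
    qed
    have b2: "abs (integral {S..t} (\<lambda>s. exp (- a * (t - s)) * h s)) \<le> c / 2 * r t"
    proof -
      have ptw: "abs (exp (- a * (t - s)) * h s) \<le> e * r t * exp (- (a/2) * (t - s))" if s: "s \<in> {S..t}" for s
      proof -
        have "abs (h s) \<le> e * r s" using S1[of s] s rpos[of s] by (auto simp: S_def)
        also have "\<dots> \<le> e * (exp ((a/2) * (t - s)) * r t)"
          using rgrow[of s t] s e by (intro mult_left_mono) (auto simp: S_def)
        finally have "exp (- a * (t - s)) * abs (h s) \<le> exp (- a * (t - s)) * (e * (exp ((a/2) * (t - s)) * r t))"
          by (intro mult_left_mono) auto
        also have "\<dots> = e * r t * (exp (- a * (t - s)) * exp ((a/2) * (t - s)))" by (simp add: algebra_simps)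
        also have "exp (- a * (t - s)) * exp ((a/2) * (t - s)) = exp (- (a/2) * (t - s))"
          by (simp add: exp_add[symmetric] algebra_simps)
        finally show ?thesis by (simp add: abs_mult)
      qed
      have hi: "((\<lambda>s. e * r t * exp (- (a/2) * (t - s))) has_integral
               (e * r t * (2 / a) * exp (- (a/2) * (t - t)) - e * r t * (2 / a) * exp (- (a/2) * (t - S)))) {S..t}"
        by (rule fundamental_theorem_of_calculus[OF St(2)])
           (use a in \<open>auto intro!: derivative_eq_intros simp: has_real_derivative_iff_has_vector_derivative[symmetric]\<close>)
      have "abs (integral {S..t} (\<lambda>s. exp (- a * (t - s)) * h s)) \<le> integral {S..t} (\<lambda>s. e * r t * exp (- (a/2) * (t - s)))"
        using integral_norm_bound_integral[of "\<lambda>s. exp (- a * (t - s)) * h s" "{S..t}" "\<lambda>s. e * r t * exp (- (a/2) * (t - s))"]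
          ptw hi St cont[of S t] by (auto intro: integrable_continuous_real has_integral_integrable)
      also have "\<dots> = e * r t * (2 / a) - e * r t * (2 / a) * exp (- (a/2) * (t - S))"
        using integral_unique[OF hi] by simp
      also have "\<dots> \<le> e * r t * (2 / a)"
        using e rpos[of t] a by simp
      also have "\<dots> = c / 2 * r t" unfolding e_def using a by (simp add: field_simps)
      finally show ?thesis .
    qed
    have "abs (Top a h t) \<le> c * r t" unfolding split using b1 b2 by linarith
    then show "norm (Top a h t) \<le> c * norm (r t)" using rpos[of t] by simp
  qed
qed

definition lc :: "(real \<Rightarrow> real) \<Rightarrow> bool" where
  "lc g \<longleftrightarrow> (\<forall>t. continuous_on {0..t} g)"

lemma lcD: "lc g \<Longrightarrow> continuous_on {0..t} g"
  by (simp add: lc_def)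

lemma lcI: "(\<And>t. continuous_on {0..t} g) \<Longrightarrow> lc g"
  by (simp add: lc_def)

lemma lc_sub: "lc g \<Longrightarrow> 0 \<le> u \<Longrightarrow> continuous_on {u..v} g"
  by (rule continuous_on_subset[OF lcD[of g v]]) auto

lemma Top_cong: "(\<And>s. 0 \<le> s \<Longrightarrow> s \<le> t \<Longrightarrow> g s = h s) \<Longrightarrow> Top a g t = Top a h t"
  unfolding Top_def by (intro integral_cong) auto

lemma Top_add: "lc g \<Longrightarrow> lc h \<Longrightarrow> Top a (\<lambda>s. g s + h s) t = Top a g t + Top a h t"
  unfolding Top_def distrib_left
  by (intro integral_add integrable_continuous_real continuous_intros lcD)

lemma Top_diff: "lc g \<Longrightarrow> lc h \<Longrightarrow> Top a (\<lambda>s. g s - h s) t = Top a g t - Top a h t"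
  unfolding Top_def right_diff_distrib
  by (intro integral_diff integrable_continuous_real continuous_intros lcD)

lemma Top_cmult: "Top a (\<lambda>s. c * g s) t = c * Top a g t"
proof -
  have "(\<lambda>s. exp (- a * (t - s)) * (c * g s)) = (\<lambda>s. c * (exp (- a * (t - s)) * g s))"
    by (auto simp: algebra_simps)
  then show ?thesis unfolding Top_def by (simp add: Henstock_Kurzweil_Integration.integral_mult_right)
qed

lemma lc_Top: "lc g \<Longrightarrow> lc (Top a g)"
proof (rule lcI)
  fix b assume g: "lc g"
  have "continuous_on {0..b} (\<lambda>t. integral {0..t} (\<lambda>s. exp (a * s) * g s))"
    by (intro indefinite_integral_continuous_1 integrable_continuous_real continuous_intros lcD[OF g])
  then have "continuous_on {0..b} (\<lambda>t. exp (- a * t) * integral {0..t} (\<lambda>s. exp (a * s) * g s))"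
    by (intro continuous_intros)
  then show "continuous_on {0..b} (Top a g)" unfolding Top_exp[abs_def] .
qed

lemma Top_ibp:
  fixes k K :: "real \<Rightarrow> real" and a T :: real
  assumes T: "0 \<le> T" and kint: "k absolutely_integrable_on {0..T}"
    and K: "\<And>t. t \<in> {0..T} \<Longrightarrow> (k has_integral (K t - K 0)) {0..t}"
  shows "Top a k T = K T - exp (- a * T) * K 0 - a * Top a K T"
proof -
  have "Top a k T = exp (- a * T) * (exp (a * T) * K T - K 0 - a * integral {0..T} (\<lambda>s. exp (a * s) * K s))"
    using ibp_exp[OF T kint K] by (simp add: Top_exp)
  also have "\<dots> = K T - exp (- a * T) * K 0 - a * Top a K T"
    unfolding Top_exp by (simp add: algebra_simps exp_minus field_simps)
  finally show ?thesis .
qed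

lemma Top_ibp_lc:
  fixes k K :: "real \<Rightarrow> real" and a T :: real
  assumes T: "0 \<le> T" and kc: "lc k"
    and K: "\<And>t. t \<in> {0..T} \<Longrightarrow> (K has_real_derivative k t) (at t within {0..T})"
  shows "Top a k T = K T - exp (- a * T) * K 0 - a * Top a K T"
proof (rule Top_ibp[OF T])
  show "k absolutely_integrable_on {0..T}"
    by (intro absolutely_integrable_continuous_real lcD kc)
  fix t assume t: "t \<in> {0..T}"
  show "(k has_integral (K t - K 0)) {0..t}"
  proof (rule fundamental_theorem_of_calculus)
    show "0 \<le> t" using t by auto
    fix s assume s: "s \<in> {0..t}"
    have "(K has_real_derivative k s) (at s within {0..T})" using K[of s] s t by auto
    then have "(K has_real_derivative k s) (at s within {0..t})"
      by (rule has_field_derivative_subset) (use t in auto)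
    then show "(K has_vector_derivative k s) (at s within {0..t})"
      by (simp add: has_real_derivative_iff_has_vector_derivative)
  qed
qed

lemma smallo_cmult: "f \<in> o[F](g) \<Longrightarrow> (\<lambda>x. c * f x) \<in> o[F](g)"
  by (subst cmult_in_smallo_iff) (rule disjI2)

lemma smallo_eventually_eq:
  fixes f g h :: "real \<Rightarrow> real"
  assumes "f \<in> o[at_top](g)" "\<And>t. t \<ge> 0 \<Longrightarrow> h t = f t"
  shows "h \<in> o[at_top](g)"
proof -
  have "eventually (\<lambda>t. h t = f t) at_top"
    unfolding eventually_at_top_linorder using assms(2) by (intro exI[of _ 0]) auto
  from landau_o.small.in_cong[OF this] show ?thesis using assms(1) by blast
qed

lemma tendsto0_mult_bigo:
  fixes u v r :: "real \<Rightarrow> real"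
  assumes "(u \<longlongrightarrow> 0) at_top" "v \<in> O[at_top](r)"
  shows "(\<lambda>t. u t * v t) \<in> o[at_top](r)"
proof -
  have "u \<in> o[at_top](\<lambda>_. 1)" by (rule smalloI_tendsto) (use assms(1) in auto)
  from landau_o.small_1_mult''[OF assms(2) this] show ?thesis by (simp add: mult.commute)
qed

lemma bounded_mult_bigo:
  fixes b r :: "real \<Rightarrow> real"
  assumes "\<And>t. abs (b t) \<le> B"
  shows "(\<lambda>t. r t * b t) \<in> O[at_top](r)"
proof (rule landau_o.bigI)
  show "0 < max B 1" by simp
  show "\<forall>\<^sub>F x in at_top. norm (r x * b x) \<le> max B 1 * norm (r x)"
  proof (intro always_eventually allI)
    fix x
    have "abs (b x) * abs (r x) \<le> max B 1 * abs (r x)"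
      by (rule mult_right_mono) (use assms[of x] in auto)
    then show "norm (r x * b x) \<le> max B 1 * norm (r x)" by (simp add: abs_mult mult.commute)
  qed
qed

lemma p_cont:
  assumes p_deriv: "\<And>t. t \<ge> 0 \<Longrightarrow> (p has_real_derivative p' t) (at t within {0..})"
  shows "continuous_on {0..} p"
  unfolding continuous_on_eq_continuous_within
  using p_deriv by (auto intro: DERIV_continuous)

lemma p_lc:
  assumes "continuous_on {0..} p"
  shows "lc p"
  by (rule lcI, rule continuous_on_subset[OF assms]) auto

lemma p_decr:
  assumes p_deriv: "\<And>t. t \<ge> 0 \<Longrightarrow> (p has_real_derivative p' t) (at t within {0..})"
    and p'_neg: "\<And>t. t \<ge> 0 \<Longrightarrow> p' t < 0"
    and uv: "0 \<le> u" "u \<le> v"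
  shows "p v \<le> p u"
proof -
  have "(p' has_integral (p v - p u)) {u..v}"
  proof (rule fundamental_theorem_of_calculus[OF uv(2)])
    fix s assume s: "s \<in> {u..v}"
    have "(p has_real_derivative p' s) (at s within {u..v})"
      by (rule has_field_derivative_subset[OF p_deriv]) (use s uv in auto)
    then show "(p has_vector_derivative p' s) (at s within {u..v})"
      by (simp add: has_real_derivative_iff_has_vector_derivative)
  qed
  moreover have "((\<lambda>_. 0::real) has_integral 0) {u..v}" by simp
  ultimately have "p v - p u \<le> 0"
    by (rule has_integral_le) (use p'_neg uv in \<open>auto simp: less_imp_le\<close>)
  then show ?thesis by simp
qed

lemma p_small:
  assumes p_deriv: "\<And>t. t \<ge> 0 \<Longrightarrow> (p has_real_derivative p' t) (at t within {0..})"
    and p'_neg: "\<And>t. t \<ge> 0 \<Longrightarrow> p' t < 0"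
    and p_sq_int: "(\<lambda>t. (p t)^2) integrable_on {0..}"
    and e: "e > 0"
  shows "\<exists>S\<ge>0. \<forall>u\<ge>S. p u \<le> e"
proof (rule ccontr)
  assume H: "\<not> (\<exists>S\<ge>0. \<forall>u\<ge>S. p u \<le> e)"
  have big: "p u > e" if u: "u \<ge> 0" for u
  proof (rule ccontr)
    assume "\<not> p u > e"
    then have "\<forall>v\<ge>u. p v \<le> e" using p_decr[OF p_deriv p'_neg u] by force
    then show False using H u by blast
  qed
  have pc: "continuous_on {0..} p" by (rule p_cont[OF p_deriv])
  define I where "I = integral {0..} (\<lambda>t. (p t)^2)"
  define n where "n = I / e^2 + 1"
  have n0: "n \<ge> 0"
  proof -
    have "I \<ge> 0" unfolding I_def by (rule integral_nonneg[OF p_sq_int]) auto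
    then show ?thesis unfolding n_def using e by auto
  qed
  have "integral {0..n} (\<lambda>t. e^2) \<le> integral {0..n} (\<lambda>t. (p t)^2)"
  proof (rule integral_le)
    show "(\<lambda>t. (p t)^2) integrable_on {0..n}"
      by (intro integrable_continuous_real continuous_intros continuous_on_subset[OF pc]) auto
    fix t assume "t \<in> {0..n}"
    then have "e \<le> p t" using big[of t] by auto
    then show "e^2 \<le> (p t)^2" using e by (intro power_mono) auto
  qed auto
  also have "\<dots> \<le> I" unfolding I_def
    by (rule integral_subset_le)
       (auto intro!: integrable_continuous_real continuous_intros continuous_on_subset[OF pc] p_sq_int)
  finally have "n * e^2 \<le> I" using n0 by simp
  moreover have "n * e^2 = I + e^2" unfolding n_def using e by (simp add: field_simps)
  ultimately show False using e by simp
qed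

lemma p_tendsto:
  assumes p_deriv: "\<And>t. t \<ge> 0 \<Longrightarrow> (p has_real_derivative p' t) (at t within {0..})"
    and p'_neg: "\<And>t. t \<ge> 0 \<Longrightarrow> p' t < 0"
    and p_sq_int: "(\<lambda>t. (p t)^2) integrable_on {0..}"
    and p_pos: "\<And>t. t \<ge> 0 \<Longrightarrow> p t > 0"
  shows "(p \<longlongrightarrow> 0) at_top"
proof (rule order_tendstoI)
  fix a :: real assume "a < 0"
  then show "\<forall>\<^sub>F x in at_top. a < p x"
    unfolding eventually_at_top_linorder using p_pos by (intro exI[of _ 0]) (auto intro: less_trans)
next
  fix a :: real assume a: "0 < a"
  obtain S where S: "S \<ge> 0" "\<forall>u\<ge>S. p u \<le> a/2"
    using p_small[OF p_deriv p'_neg p_sq_int, of "a/2"] a by auto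
  show "\<forall>\<^sub>F x in at_top. p x < a"
    unfolding eventually_at_top_linorder using S a by (intro exI[of _ S]) force
qed

lemma P_bound:
  fixes p :: "real \<Rightarrow> real"
  assumes pc: "continuous_on {0..} p" and S: "0 \<le> S" "\<forall>u\<ge>S. p u \<le> e"
    and st: "S \<le> s" "s \<le> t"
  shows "integral {0..t} p - integral {0..s} p \<le> e * (t - s)"
proof -
  have "integral {0..s} p + integral {s..t} p = integral {0..t} p"
    by (rule Henstock_Kurzweil_Integration.integral_combine)
       (use S st in \<open>auto intro!: integrable_continuous_real continuous_on_subset[OF pc]\<close>)
  moreover have "integral {s..t} p \<le> integral {s..t} (\<lambda>_. e)"
    by (rule integral_le) (use S st in \<open>auto intro!: integrable_continuous_real continuous_on_subset[OF pc]\<close>)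
  moreover have "(t - s) * e = e * (t - s)" by simp
  ultimately show ?thesis using st by simp
qed

lemma rho_eq: "rho p t = exp (- (1/2) * integral {0..t} p)"
  by (simp add: rho_def A_fun_def exp_minus field_simps)

lemma rho_pos: "rho p t > 0"
  by (simp add: rho_eq)

lemma rho_grow:
  assumes p_deriv: "\<And>t. t \<ge> 0 \<Longrightarrow> (p has_real_derivative p' t) (at t within {0..})"
    and p'_neg: "\<And>t. t \<ge> 0 \<Longrightarrow> p' t < 0"
    and p_sq_int: "(\<lambda>t. (p t)^2) integrable_on {0..}"
    and a: "a > 0"
  shows "\<exists>S0. \<forall>s t. S0 \<le> s \<longrightarrow> s \<le> t \<longrightarrow> rho p s \<le> exp ((a/2) * (t - s)) * rho p t"
proof -
  obtain S where S: "S \<ge> 0" "\<forall>u\<ge>S. p u \<le> a"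
    using p_small[OF p_deriv p'_neg p_sq_int a] by auto
  have pc: "continuous_on {0..} p" by (rule p_cont[OF p_deriv])
  have "rho p s \<le> exp ((a/2) * (t - s)) * rho p t" if st: "S \<le> s" "s \<le> t" for s t
  proof -
    have "integral {0..t} p - integral {0..s} p \<le> a * (t - s)" by (rule P_bound[OF pc S st])
    then have "- (1/2) * integral {0..s} p \<le> (a/2) * (t - s) + - (1/2) * integral {0..t} p" by simp
    then have "exp (- (1/2) * integral {0..s} p) \<le> exp ((a/2) * (t - s) + - (1/2) * integral {0..t} p)"
      by (simp only: exp_le_cancel_iff)
    also have "\<dots> = exp ((a/2) * (t - s)) * exp (- (1/2) * integral {0..t} p)"
      by (rule exp_add)
    finally show ?thesis by (simp only: rho_eq)
  qed
  then show ?thesis by blast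
qed

lemma rho_exp:
  assumes p_deriv: "\<And>t. t \<ge> 0 \<Longrightarrow> (p has_real_derivative p' t) (at t within {0..})"
    and p'_neg: "\<And>t. t \<ge> 0 \<Longrightarrow> p' t < 0"
    and p_sq_int: "(\<lambda>t. (p t)^2) integrable_on {0..}"
    and d: "d > 0"
  shows "(\<lambda>t. exp (- d * t)) \<in> o[at_top](rho p)"
proof (rule landau_o.smallI)
  fix c :: real assume c: "c > 0"
  obtain S where S: "S \<ge> 0" "\<forall>u\<ge>S. p u \<le> d"
    using p_small[OF p_deriv p'_neg p_sq_int d] by auto
  have pc: "continuous_on {0..} p" by (rule p_cont[OF p_deriv])
  define PS where "PS = integral {0..S} p"
  define T1 where "T1 = (PS - d * S - 2 * ln c) / d"
  show "\<forall>\<^sub>F t in at_top. norm (exp (- d * t)) \<le> c * norm (rho p t)"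
    unfolding eventually_at_top_linorder
  proof (intro exI[of _ "max S T1"] allI impI)
    fix t assume t: "t \<ge> max S T1"
    have "integral {0..t} p - PS \<le> d * (t - S)" unfolding PS_def
      by (rule P_bound[OF pc S]) (use t in auto)
    moreover have "d * t \<ge> PS - d * S - 2 * ln c"
      using t d by (simp add: T1_def field_simps)
    ultimately have "- d * t + (1/2) * integral {0..t} p \<le> ln c" by (simp add: field_simps)
    then have "exp (- d * t + (1/2) * integral {0..t} p) \<le> c"
      using c by (metis exp_le_cancel_iff exp_ln)
    then have m1: "exp (- d * t + (1/2) * integral {0..t} p) * rho p t \<le> c * rho p t"
      using rho_pos[of p t] by (intro mult_right_mono) auto
    have m2: "exp (- d * t + (1/2) * integral {0..t} p) * rho p t = exp (- d * t)"
      by (simp add: rho_eq exp_add[symmetric])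
    show "norm (exp (- d * t)) \<le> c * norm (rho p t)"
      using rho_pos[of p t] m1 unfolding m2 by simp
  qed
qed

lemma lc_rho:
  assumes pc: "continuous_on {0..} p"
  shows "lc (rho p)"
proof (rule lcI)
  fix b
  have "continuous_on {0..b} (\<lambda>t. exp (- (1/2) * integral {0..t} p))"
    by (intro continuous_intros indefinite_integral_continuous_1 integrable_continuous_real
          continuous_on_subset[OF pc]) auto
  then show "continuous_on {0..b} (rho p)" by (simp add: rho_eq[abs_def])
qed

lemma rho_deriv:
  assumes pc: "continuous_on {0..} p" and s: "s \<in> {0..t}"
  shows "(rho p has_real_derivative (- (1/2) * p s * rho p s)) (at s within {0..t})"
proof -
  have P: "((\<lambda>u. integral {0..u} p) has_real_derivative p s) (at s within {0..t})"
    by (rule integral_has_real_derivative[OF continuous_on_subset[OF pc] s]) auto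
  have "((\<lambda>u. exp (- (1/2) * integral {0..u} p)) has_real_derivative
        exp (- (1/2) * integral {0..s} p) * (- (1/2) * p s)) (at s within {0..t})"
    using P by (auto intro!: derivative_eq_intros)
  then show ?thesis by (simp add: rho_eq[abs_def] rho_eq algebra_simps)
qed

theorem mainTheorem18:
  fixes w :: real and p p' f x x' :: "real \<Rightarrow> real"
  assumes w_pos: "w > 0"
    and p_deriv: "\<And>t. t \<ge> 0 \<Longrightarrow> (p has_real_derivative p' t) (at t within {0..})"
    and p'_cont: "continuous_on {0..} p'"
    and p_pos: "\<And>t. t \<ge> 0 \<Longrightarrow> p t > 0"
    and p'_neg: "\<And>t. t \<ge> 0 \<Longrightarrow> p' t < 0"
    and p_int_div: "filterlim (\<lambda>t. integral {0..t} p) at_top at_top"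
    and p_sq_int: "(\<lambda>t. (p t)^2) integrable_on {0..}"
    and f_loc: "\<And>t. t \<ge> 0 \<Longrightarrow> f absolutely_integrable_on {0..t}"
    and x_deriv: "\<And>t. t \<ge> 0 \<Longrightarrow> (x has_real_derivative x' t) (at t within {0..})"
    and x'_eq: "\<And>t. t \<ge> 0 \<Longrightarrow>
       ((\<lambda>s. f s - p s * x' s - w^2 * x s) has_integral (x' t - x' 0)) {0..t}"
    and x0: "x 0 = 0" and x'0: "x' 0 = 0"
    and p'_lim: "(p' \<longlongrightarrow> 0) at_top"
    and asym: "\<exists>c1 c2. (\<lambda>t. x t - rho p t * (c1 * sin (w * t) + c2 * cos (w * t)))
                 \<in> o[at_top](rho p)"
  shows "y2 w f \<in> o[at_top](rho p)"
proof -
  define a where "a = w^2"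
  have a: "a > 0" using w_pos by (simp add: a_def)
  note x'_eq' = x'_eq[unfolded a_def[symmetric] x'0, simplified]
  have pc: "continuous_on {0..} p" by (rule p_cont[OF p_deriv])
  have plc: "lc p" by (rule p_lc[OF pc])
  have p'lc: "lc p'" by (rule p_lc[OF p'_cont])
  have xc: "continuous_on {0..} x" by (rule p_cont[OF x_deriv])
  have xlc: "lc x" by (rule p_lc[OF xc])
  have rlc: "lc (rho p)" by (rule lc_rho[OF pc])
  obtain S0 where rgrow: "\<And>s t. S0 \<le> s \<Longrightarrow> s \<le> t \<Longrightarrow> rho p s \<le> exp ((a/2) * (t - s)) * rho p t"
    using rho_grow[OF p_deriv p'_neg p_sq_int a] by blast
  have rexp: "(\<lambda>t. exp (- a * t)) \<in> o[at_top](rho p)"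
    by (rule rho_exp[OF p_deriv p'_neg p_sq_int a])
  have TB: "Top a h \<in> o[at_top](rho p)" if "lc h" "h \<in> o[at_top](rho p)" for h
    by (rule Top_smallo[OF a rho_pos rgrow rexp lcD[OF that(1)] that(2)])
  define G where "G s = f s - p s * x' s - a * x s" for s
  have Gint: "(G has_integral x' t) {0..t}" if "t \<ge> 0" for t
    using x'_eq'[OF that] unfolding G_def .
  have x'lc: "lc x'"
  proof (rule lcI)
    fix b
    show "continuous_on {0..b} x'"
    proof (cases "b \<ge> 0")
      case True
      have "continuous_on {0..b} (\<lambda>t. integral {0..t} G)"
        by (rule indefinite_integral_continuous_1) (use Gint[OF True] in blast)
      then show ?thesis
        by (rule continuous_on_eq) (use Gint in \<open>auto intro: integral_unique\<close>)
    qed auto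
  qed
  define q where "q s = p s * x' s + a * x s" for s
  have qlc: "lc q" unfolding q_def by (intro lcI continuous_intros lcD[OF plc] lcD[OF x'lc] lcD[OF xlc])
  define Q where "Q t = integral {0..t} q" for t
  define F where "F t = integral {0..t} f" for t
  have FxQ: "F t = x' t + Q t" if t: "t \<ge> 0" for t
  proof -
    have fi: "f integrable_on {0..t}" using f_loc[OF t] by (simp add: absolutely_integrable_on_def)
    have qi: "q integrable_on {0..t}" by (intro integrable_continuous_real lcD[OF qlc])
    have "(G has_integral (F t - Q t)) {0..t}"
    proof -
      have "((\<lambda>s. f s - q s) has_integral (F t - Q t)) {0..t}"
        unfolding F_def Q_def by (intro has_integral_diff integrable_integral fi qi)
      moreover have "(\<lambda>s. f s - q s) = G" by (auto simp: G_def q_def fun_eq_iff)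
      ultimately show ?thesis by simp
    qed
    then show ?thesis using Gint[OF t] by (metis has_integral_unique diff_add_cancel add.commute eq_diff_eq)
  qed
  have Qd: "(Q has_real_derivative q s) (at s within {0..t})" if "s \<in> {0..t}" for s t
    unfolding Q_def by (rule integral_has_real_derivative[OF lcD[OF qlc] that])
  have Qlc: "lc Q"
    unfolding Q_def by (intro lcI indefinite_integral_continuous_1 integrable_continuous_real lcD[OF qlc])
  have A1: "Top a f t = F t - a * Top a F t" if t: "t \<ge> 0" for t
  proof -
    have "Top a f t = F t - exp (- a * t) * F 0 - a * Top a F t"
    proof (rule Top_ibp[OF t f_loc[OF t]])
      fix s assume s: "s \<in> {0..t}"
      have "f integrable_on {0..s}" using f_loc[of s] s by (auto simp: absolutely_integrable_on_def)
      then show "(f has_integral (F s - F 0)) {0..s}" by (simp add: F_def has_integral_integral)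
    qed
    then show ?thesis by (simp add: F_def)
  qed
  have A2: "Top a x' t = x t - a * Top a x t" if t: "t \<ge> 0" for t
  proof -
    have "Top a x' t = x t - exp (- a * t) * x 0 - a * Top a x t"
      by (rule Top_ibp_lc[OF t x'lc], rule has_field_derivative_subset[OF x_deriv]) auto
    then show ?thesis by (simp add: x0)
  qed
  have A3: "Top a q t = Q t - a * Top a Q t" if t: "t \<ge> 0" for t
  proof -
    have "Top a q t = Q t - exp (- a * t) * Q 0 - a * Top a Q t"
      by (rule Top_ibp_lc[OF t qlc Qd])
    then show ?thesis by (simp add: Q_def)
  qed
  have pxlc: "lc (\<lambda>s. p s * x s)" by (intro lcI continuous_intros lcD[OF plc] lcD[OF xlc])
  have p'xlc: "lc (\<lambda>s. p' s * x s)" by (intro lcI continuous_intros lcD[OF p'lc] lcD[OF xlc])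
  have px'lc: "lc (\<lambda>s. p s * x' s)" by (intro lcI continuous_intros lcD[OF plc] lcD[OF x'lc])
  have axlc: "lc (\<lambda>s. a * x s)" by (intro lcI continuous_intros lcD[OF xlc])
  have A4: "Top a (\<lambda>s. p' s * x s + p s * x' s) t = p t * x t - a * Top a (\<lambda>s. p s * x s) t"
    if t: "t \<ge> 0" for t
  proof -
    have "Top a (\<lambda>s. p' s * x s + p s * x' s) t = p t * x t - exp (- a * t) * (p 0 * x 0) - a * Top a (\<lambda>s. p s * x s) t"
    proof (rule Top_ibp_lc[OF t])
      show "lc (\<lambda>s. p' s * x s + p s * x' s)"
        by (intro lcI continuous_intros lcD[OF plc] lcD[OF xlc] lcD[OF p'lc] lcD[OF x'lc])
      fix s assume s: "s \<in> {0..t}"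
      have "((\<lambda>s. p s * x s) has_real_derivative (p' s * x s + x' s * p s)) (at s within {0..t})"
        by (rule DERIV_mult; rule has_field_derivative_subset[OF p_deriv] has_field_derivative_subset[OF x_deriv])
           (use s in auto)
      then show "((\<lambda>s. p s * x s) has_real_derivative (p' s * x s + p s * x' s)) (at s within {0..t})"
        by (simp add: mult.commute)
    qed
    then show ?thesis by (simp add: x0)
  qed
  define E1 where "E1 t = p t * x t - a * Top a (\<lambda>s. p s * x s) t - Top a (\<lambda>s. p' s * x s) t" for t
  have y1eq: "Top a f t = x' t - a * x t + (a^2 + a) * Top a x t + E1 t" if t: "t \<ge> 0" for t
  proof -
    have h1: "Top a F t = Top a x' t + Top a Q t"
    proof -
      have "Top a F t = Top a (\<lambda>s. x' s + Q s) t" by (rule Top_cong) (simp add: FxQ)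
      also have "\<dots> = Top a x' t + Top a Q t" by (rule Top_add[OF x'lc Qlc])
      finally show ?thesis .
    qed
    have h2: "Top a q t = Top a (\<lambda>s. p s * x' s) t + a * Top a x t"
      unfolding q_def Top_add[OF px'lc axlc] Top_cmult ..
    have h3: "Top a (\<lambda>s. p' s * x s + p s * x' s) t = Top a (\<lambda>s. p' s * x s) t + Top a (\<lambda>s. p s * x' s) t"
      by (rule Top_add[OF p'xlc px'lc])
    have "Top a f t = F t - a * (Top a x' t + Top a Q t)" using A1[OF t] h1 by simp
    also have "\<dots> = F t - a * (x t - a * Top a x t) - (Q t - Top a q t)"
      using A3[OF t] by (simp add: A2[OF t] algebra_simps; linarith)
    also have "\<dots> = x' t - a * x t + (a^2 + a) * Top a x t + E1 t"
      using FxQ[OF t] h2 h3 A4[OF t] unfolding E1_def by (simp add: algebra_simps power2_eq_square)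
    finally show ?thesis .
  qed
  have y1T: "y1 w f = Top a f" by (simp add: fun_eq_iff y1_def Top_def a_def)
  have y2T: "y2 w f = Top a (Top a f)" unfolding y1T[symmetric] by (simp add: fun_eq_iff y2_def Top_def a_def)
  have Txlc: "lc (Top a x)" by (rule lc_Top[OF xlc])
  have E1lc: "lc E1" unfolding E1_def
    by (intro lcI continuous_intros lcD[OF plc] lcD[OF xlc] lcD[OF lc_Top[OF pxlc]] lcD[OF lc_Top[OF p'xlc]])
  have y2eq: "y2 w f t = x t - 2 * a * Top a x t + (a^2 + a) * Top a (Top a x) t + Top a E1 t"
    if t: "t \<ge> 0" for t
  proof -
    have l1: "lc (\<lambda>s. x' s - a * x s)" by (intro lcI continuous_intros lcD[OF x'lc] lcD[OF xlc])
    have l2: "lc (\<lambda>s. (a^2 + a) * Top a x s)" by (intro lcI continuous_intros lcD[OF Txlc])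
    have l3: "lc (\<lambda>s. x' s - a * x s + (a^2 + a) * Top a x s)"
      by (intro lcI continuous_intros lcD[OF x'lc] lcD[OF xlc] lcD[OF Txlc])
    have "y2 w f t = Top a (\<lambda>s. x' s - a * x s + (a^2 + a) * Top a x s + E1 s) t"
      unfolding y2T by (rule Top_cong) (simp add: y1eq)
    also have "\<dots> = Top a (\<lambda>s. x' s - a * x s) t + (a^2 + a) * Top a (Top a x) t + Top a E1 t"
      by (simp only: Top_add[OF l3 E1lc] Top_add[OF l1 l2] Top_cmult)
    also have "Top a (\<lambda>s. x' s - a * x s) t = x t - 2 * a * Top a x t"
      by (simp only: Top_diff[OF x'lc axlc] Top_cmult A2[OF t])
    finally show ?thesis .
  qed
  obtain c1 c2 where r_o: "(\<lambda>t. x t - rho p t * (c1 * sin (w * t) + c2 * cos (w * t))) \<in> o[at_top](rho p)"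
    using asym by blast
  define c where "c s = c1 * sin (w * s) + c2 * cos (w * s)" for s
  define cd where "cd s = w * (c1 * cos (w * s) - c2 * sin (w * s))" for s
  define m where "m s = rho p s * c s" for s
  define r where "r s = x s - m s" for s
  have r_o': "r \<in> o[at_top](rho p)" using r_o unfolding r_def m_def c_def .
  have clc: "lc c" unfolding c_def by (intro lcI continuous_intros)
  have cdlc: "lc cd" unfolding cd_def by (intro lcI continuous_intros)
  have mlc: "lc m" unfolding m_def by (intro lcI continuous_intros lcD[OF rlc] lcD[OF clc])
  have rrlc: "lc r" unfolding r_def by (intro lcI continuous_intros lcD[OF xlc] lcD[OF mlc])
  define m1 where "m1 s = (- (1/2) * p s * rho p s) * c s + rho p s * cd s" for s
  define g0 where "g0 s = (- (1/2) * p' s + (1/4) * (p s)^2) * m s - p s * (rho p s * cd s)" for s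
  define k where "k s = g0 s - a * m s" for s
  have m1lc: "lc m1" unfolding m1_def
    by (intro lcI continuous_intros lcD[OF rlc] lcD[OF clc] lcD[OF cdlc] lcD[OF plc])
  have g0lc: "lc g0" unfolding g0_def
    by (intro lcI continuous_intros lcD[OF rlc] lcD[OF mlc] lcD[OF cdlc] lcD[OF plc] lcD[OF p'lc])
  have amlc: "lc (\<lambda>s. a * m s)" by (intro lcI continuous_intros lcD[OF mlc])
  have klc: "lc k" unfolding k_def by (intro lcI continuous_intros lcD[OF g0lc] lcD[OF mlc])
  have dc: "(c has_real_derivative cd s) (at s within S)" for s S
  proof -
    have "(c has_real_derivative cd s) (at s)"
      unfolding c_def[abs_def] cd_def by (auto intro!: derivative_eq_intros simp: algebra_simps)
    then show ?thesis by (rule has_field_derivative_at_within)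
  qed
  have dcd: "(cd has_real_derivative (- a * c s)) (at s within S)" for s S
  proof -
    have "(cd has_real_derivative (- a * c s)) (at s)"
      unfolding cd_def[abs_def] c_def a_def by (auto intro!: derivative_eq_intros simp: algebra_simps power2_eq_square)
    then show ?thesis by (rule has_field_derivative_at_within)
  qed
  have dp: "(p has_real_derivative p' s) (at s within {0..t})" if "s \<in> {0..t}" for s t
    by (rule has_field_derivative_subset[OF p_deriv]) (use that in auto)
  have drho: "(rho p has_real_derivative (- (1/2) * p s * rho p s)) (at s within {0..t})" if "s \<in> {0..t}" for s t
    by (rule rho_deriv[OF pc that])
  have dm: "(m has_real_derivative m1 s) (at s within {0..t})" if s: "s \<in> {0..t}" for s t
  proof -
    have "((\<lambda>s. rho p s * c s) has_real_derivative (- (1/2) * p s * rho p s) * c s + cd s * rho p s) (at s within {0..t})"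
      by (rule DERIV_mult[OF drho[OF s] dc])
    then show ?thesis unfolding m_def[abs_def] m1_def by (simp add: algebra_simps)
  qed
  have dm1: "(m1 has_real_derivative k s) (at s within {0..t})" if s: "s \<in> {0..t}" for s t
  proof -
    show ?thesis unfolding m1_def[abs_def]
      by (rule derivative_eq_intros dp[OF s] drho[OF s] dc dcd refl)+
         (simp add: k_def g0_def m_def algebra_simps power2_eq_square)
  qed
  define e where "e s = exp (- a * s)" for s
  have elc: "lc e" unfolding e_def by (intro lcI continuous_intros)
  define C where "C = m1 0 - a * m 0"
  have A5: "Top a m1 t = m t - e t * m 0 - a * Top a m t" if t: "t \<ge> 0" for t
    unfolding e_def by (rule Top_ibp_lc[OF t m1lc dm])
  have A6: "Top a k t = m1 t - e t * m1 0 - a * Top a m1 t" if t: "t \<ge> 0" for t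
    unfolding e_def by (rule Top_ibp_lc[OF t klc dm1])
  have Tk: "Top a k t = Top a g0 t - a * Top a m t" for t
    unfolding k_def[abs_def] Top_diff[OF g0lc amlc] Top_cmult ..
  have m1eq: "m1 t = Top a g0 t + a * m t - (a^2 + a) * Top a m t + C * e t" if t: "t \<ge> 0" for t
  proof -
    have "a * Top a m1 t = a * (m t - e t * m 0 - a * Top a m t)"
      using A5[OF t] by simp
    then have "a * Top a m1 t = a * m t - a * (e t * m 0) - a * (a * Top a m t)"
      by (simp only: right_diff_distrib)
    then show ?thesis
      using A6[OF t] Tk[of t] unfolding C_def by (simp add: algebra_simps power2_eq_square; linarith)
  qed
  have Tglc: "lc (Top a g0)" by (rule lc_Top[OF g0lc])
  have Tmlc: "lc (Top a m)" by (rule lc_Top[OF mlc])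
  have Nm: "m t - 2 * a * Top a m t + (a^2 + a) * Top a (Top a m) t
      = Top a (Top a g0) t + m 0 * e t + C * Top a e t" if t: "t \<ge> 0" for t
  proof -
    have l1: "lc (\<lambda>s. Top a g0 s + a * m s)" by (intro lcI continuous_intros lcD[OF Tglc] lcD[OF mlc])
    have l2: "lc (\<lambda>s. (a^2 + a) * Top a m s)" by (intro lcI continuous_intros lcD[OF Tmlc])
    have l3: "lc (\<lambda>s. Top a g0 s + a * m s - (a^2 + a) * Top a m s)"
      by (intro lcI continuous_intros lcD[OF Tglc] lcD[OF mlc] lcD[OF Tmlc])
    have l4: "lc (\<lambda>s. C * e s)" by (intro lcI continuous_intros lcD[OF elc])
    have "Top a m1 t = Top a (\<lambda>s. Top a g0 s + a * m s - (a^2 + a) * Top a m s + C * e s) t"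
      by (rule Top_cong) (simp add: m1eq)
    also have "\<dots> = Top a (Top a g0) t + a * Top a m t - (a^2 + a) * Top a (Top a m) t + C * Top a e t"
      by (simp only: Top_add[OF l3 l4] Top_diff[OF l1 l2] Top_add[OF Tglc amlc] Top_cmult)
    finally show ?thesis using A5[OF t] by (simp add: algebra_simps)
  qed
  have Trlc: "lc (Top a r)" by (rule lc_Top[OF rrlc])
  have Txsplit: "Top a x t = Top a m t + Top a r t" if t: "t \<ge> 0" for t
  proof -
    have "Top a x t = Top a (\<lambda>s. m s + r s) t" by (rule Top_cong) (simp add: r_def)
    then show ?thesis by (simp only: Top_add[OF mlc rrlc])
  qed
  have TTxsplit: "Top a (Top a x) t = Top a (Top a m) t + Top a (Top a r) t" if t: "t \<ge> 0" for t
  proof -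
    have "Top a (Top a x) t = Top a (\<lambda>s. Top a m s + Top a r s) t" by (rule Top_cong) (simp add: Txsplit)
    then show ?thesis by (simp only: Top_add[OF Tmlc Trlc])
  qed
  define R where "R t = Top a (Top a g0) t + m 0 * e t + C * Top a e t
      + (r t - 2 * a * Top a r t + (a^2 + a) * Top a (Top a r) t) + Top a E1 t" for t
  have y2R: "y2 w f t = R t" if t: "t \<ge> 0" for t
  proof -
    have "y2 w f t = (m t - 2 * a * Top a m t + (a^2 + a) * Top a (Top a m) t)
        + (r t - 2 * a * Top a r t + (a^2 + a) * Top a (Top a r) t) + Top a E1 t"
      unfolding y2eq[OF t] Txsplit[OF t] TTxsplit[OF t] by (simp add: r_def algebra_simps)
    then show ?thesis unfolding R_def Nm[OF t] by simp
  qed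
  have p_lim: "(p \<longlongrightarrow> 0) at_top" by (rule p_tendsto[OF p_deriv p'_neg p_sq_int p_pos])
  have cb: "abs (c t) \<le> abs c1 + abs c2" for t
  proof -
    have "abs (c1 * sin (w * t)) \<le> abs c1" by (simp add: abs_mult mult_right_le_one_le)
    moreover have "abs (c2 * cos (w * t)) \<le> abs c2" by (simp add: abs_mult mult_right_le_one_le)
    ultimately show ?thesis unfolding c_def by (meson abs_triangle_ineq add_mono order_trans)
  qed
  have cdb: "abs (cd t) \<le> w * (abs c1 + abs c2)" for t
  proof -
    have "abs (c1 * cos (w * t)) \<le> abs c1" by (simp add: abs_mult mult_right_le_one_le)
    moreover have "abs (c2 * sin (w * t)) \<le> abs c2" by (simp add: abs_mult mult_right_le_one_le)
    ultimately have "abs (c1 * cos (w * t) - c2 * sin (w * t)) \<le> abs c1 + abs c2"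
      by (meson abs_triangle_ineq4 add_mono order_trans)
    then show ?thesis unfolding cd_def using w_pos by (simp add: abs_mult mult_left_mono)
  qed
  have m_O: "m \<in> O[at_top](rho p)"
    unfolding m_def[abs_def] by (rule bounded_mult_bigo[OF cb])
  have rcd_O: "(\<lambda>s. rho p s * cd s) \<in> O[at_top](rho p)"
    by (rule bounded_mult_bigo[OF cdb])
  have x_O: "x \<in> O[at_top](rho p)"
  proof -
    have "(\<lambda>t. m t + r t) \<in> O[at_top](rho p)"
      by (rule sum_in_bigo(1)[OF m_O landau_o.small_imp_big[OF r_o']])
    moreover have "(\<lambda>t. m t + r t) = x" by (simp add: r_def fun_eq_iff)
    ultimately show ?thesis by simp
  qed
  have px_o: "(\<lambda>s. p s * x s) \<in> o[at_top](rho p)" by (rule tendsto0_mult_bigo[OF p_lim x_O])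
  have p'x_o: "(\<lambda>s. p' s * x s) \<in> o[at_top](rho p)" by (rule tendsto0_mult_bigo[OF p'_lim x_O])
  have E1_o: "E1 \<in> o[at_top](rho p)"
    unfolding E1_def[abs_def]
    by (intro sum_in_smallo smallo_cmult px_o TB[OF pxlc px_o] TB[OF p'xlc p'x_o])
  have u_lim: "((\<lambda>s. - (1/2) * p' s + (1/4) * (p s)^2) \<longlongrightarrow> 0) at_top"
  proof -
    have "((\<lambda>s. - (1/2) * p' s + (1/4) * (p s)^2) \<longlongrightarrow> - (1/2) * 0 + (1/4) * 0^2) at_top"
      by (intro tendsto_intros p'_lim p_lim)
    then show ?thesis by simp
  qed
  have g0_o: "g0 \<in> o[at_top](rho p)"
    unfolding g0_def[abs_def]
    by (intro sum_in_smallo tendsto0_mult_bigo[OF u_lim m_O] tendsto0_mult_bigo[OF p_lim rcd_O])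
  have e_o: "e \<in> o[at_top](rho p)" unfolding e_def[abs_def] by (rule rexp)
  have Tr_o: "Top a r \<in> o[at_top](rho p)" by (rule TB[OF rrlc r_o'])
  have R_o: "R \<in> o[at_top](rho p)"
    unfolding R_def[abs_def]
    by (intro sum_in_smallo smallo_cmult TB[OF Tglc TB[OF g0lc g0_o]] e_o TB[OF elc e_o]
          r_o' Tr_o TB[OF Trlc Tr_o] TB[OF E1lc E1_o])
  show ?thesis by (rule smallo_eventually_eq[OF R_o y2R])
qed

end
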